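(* For every $G\in C^2(\mathbb{R})$ there is a separately convex function $F:\mathbb{R}^2\to\mathbb{R}$ such that $F(t,t)=G(t)$ for each $t\in\mathbb{R}$.
   Context: A function $F:\mathbb{R}^2\to\mathbb{R}$ is called separately convex if it is convex on every line parallel to a coordinate axis. *)

theory Defs
  imports "HOL-Analysis.Analysis"
begin

definition C2 :: "(real \<Rightarrow> real) \<Rightarrow> bool" where
  "C2 G \<longleftrightarrow> (\<exists>G' G''. (\<forall>t. (G has_real_derivative G' t) (at t)) \<and>
                      (\<forall>t. (G' has_real_derivative G'' t) (at t)) \<and>
                      continuous_on UNIV G'')"

definition separately_convex :: "(real \<times> real \<Rightarrow> real) \<Rightarrow> bool" where
  "separately_convex F \<longleftrightarrow>
     (\<forall>y. convex_on UNIV (\<lambda>x. F (x, y))) \<and> (\<forall>x. convex_on UNIV (\<lambda>y. F (x, y)))"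

end

theory Submission
  imports Defs
begin

lemma antideriv:
  fixes f :: "real \<Rightarrow> real"
  assumes "\<And>x. isCont f x"
  shows "\<exists>F. \<forall>x. (F has_real_derivative f x) (at x)"
proof -
  from einterval_antiderivative[of "-\<infinity>" "\<infinity>" f] assms
  obtain F where "\<forall>x. (F has_vector_derivative f x) (at x)" by auto
  thus ?thesis by (auto simp: has_real_derivative_iff_has_vector_derivative)
qed

definition runmax :: "(real \<Rightarrow> real) \<Rightarrow> real \<Rightarrow> real" where
  "runmax k r = Sup (k ` {-\<bar>r\<bar>..\<bar>r\<bar>})"

lemma runmax_bdd:
  fixes k :: "real \<Rightarrow> real"
  assumes "continuous_on UNIV k"
  shows "bdd_above (k ` {-a..a})"
proof -
  have "compact (k ` {-a..a})"
    by (rule compact_continuous_image) (auto intro: continuous_on_subset[OF assms])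
  thus ?thesis by (intro bounded_imp_bdd_above compact_imp_bounded)
qed

lemma runmax_upper:
  assumes "continuous_on UNIV k" "\<bar>s\<bar> \<le> \<bar>r\<bar>"
  shows "k s \<le> runmax k r"
  unfolding runmax_def
proof (rule cSup_upper)
  show "k s \<in> k ` {-\<bar>r\<bar>..\<bar>r\<bar>}" using assms(2) by (intro imageI) (auto simp: abs_le_iff)
qed (use runmax_bdd[OF assms(1)] in auto)

lemma runmax_least:
  assumes "\<And>s. \<bar>s\<bar> \<le> \<bar>r\<bar> \<Longrightarrow> k s \<le> B"
  shows "runmax k r \<le> B"
  unfolding runmax_def
  by (rule cSup_least) (use assms in auto)

lemma runmax_mono:
  assumes "continuous_on UNIV k" "\<bar>r\<bar> \<le> \<bar>r'\<bar>"
  shows "runmax k r \<le> runmax k r'"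
  by (rule runmax_least) (use assms in \<open>auto intro!: runmax_upper\<close>)

lemma runmax_cont:
  fixes k :: "real \<Rightarrow> real"
  assumes cont: "continuous_on UNIV k"
  shows "isCont (runmax k) r0"
  unfolding continuous_at_eps_delta
proof (intro allI impI)
  fix \<epsilon> :: real assume e: "\<epsilon> > 0"
  define \<rho>0 where "\<rho>0 = \<bar>r0\<bar>"
  have ck: "isCont k x" for x using cont by (simp add: continuous_on_eq_continuous_at)
  have e4: "\<epsilon>/4 > 0" using e by simp
  obtain d1 where d1: "d1 > 0" "\<And>s. dist s \<rho>0 < d1 \<Longrightarrow> dist (k s) (k \<rho>0) < \<epsilon>/4"
    using ck[of \<rho>0] e4 unfolding continuous_at_eps_delta by blast
  obtain d2 where d2: "d2 > 0" "\<And>s. dist s (-\<rho>0) < d2 \<Longrightarrow> dist (k s) (k (-\<rho>0)) < \<epsilon>/4"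
    using ck[of "-\<rho>0"] e4 unfolding continuous_at_eps_delta by blast
  have kp: "k \<rho>0 \<le> runmax k r0" "k (-\<rho>0) \<le> runmax k r0"
    by (auto intro!: runmax_upper cont simp: \<rho>0_def)
  show "\<exists>d>0. \<forall>r. dist r r0 < d \<longrightarrow> dist (runmax k r) (runmax k r0) < \<epsilon>"
  proof (intro exI[of _ "min d1 d2"] conjI allI impI)
    show "min d1 d2 > 0" using d1 d2 by simp
    fix r assume "dist r r0 < min d1 d2"
    define \<rho> where "\<rho> = \<bar>r\<bar>"
    have dr: "\<bar>\<rho> - \<rho>0\<bar> < d1" "\<bar>\<rho> - \<rho>0\<bar> < d2"
      using \<open>dist r r0 < min d1 d2\<close> unfolding \<rho>_def \<rho>0_def dist_real_def by auto
    have kq: "k \<rho> \<le> runmax k r" "k (-\<rho>) \<le> runmax k r"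
      by (auto intro!: runmax_upper cont simp: \<rho>_def)
    show "dist (runmax k r) (runmax k r0) < \<epsilon>"
    proof (cases "\<rho>0 \<le> \<rho>")
      case True
      have m: "runmax k r0 \<le> runmax k r" using True by (auto intro!: runmax_mono cont simp: \<rho>_def \<rho>0_def)
      have "runmax k r \<le> runmax k r0 + \<epsilon>/4"
      proof (rule runmax_least)
        fix s assume s: "\<bar>s\<bar> \<le> \<bar>r\<bar>"
        show "k s \<le> runmax k r0 + \<epsilon>/4"
        proof (cases "\<bar>s\<bar> \<le> \<bar>r0\<bar>")
          case True thus ?thesis using runmax_upper[OF cont True] e by linarith
        next
          case False
          show ?thesis
          proof (cases "s > 0")
            case True
            hence "dist s \<rho>0 < d1" using s False dr unfolding dist_real_def \<rho>_def \<rho>0_def by auto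
            from d1(2)[OF this] kp show ?thesis unfolding dist_real_def abs_less_iff by linarith
          next
            case False': False
            hence "dist s (-\<rho>0) < d2" using s False dr unfolding dist_real_def \<rho>_def \<rho>0_def by auto
            from d2(2)[OF this] kp show ?thesis unfolding dist_real_def abs_less_iff by linarith
          qed
        qed
      qed
      thus ?thesis using m e unfolding dist_real_def by auto
    next
      case False
      have m: "runmax k r \<le> runmax k r0" using False by (auto intro!: runmax_mono cont simp: \<rho>_def \<rho>0_def)
      have "runmax k r0 \<le> runmax k r + \<epsilon>/2"
      proof (rule runmax_least)
        fix s assume s: "\<bar>s\<bar> \<le> \<bar>r0\<bar>"
        show "k s \<le> runmax k r + \<epsilon>/2"
        proof (cases "\<bar>s\<bar> \<le> \<bar>r\<bar>")
          case True thus ?thesis using runmax_upper[OF cont True] e by linarith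
        next
          case False': False
          show ?thesis
          proof (cases "s > 0")
            case True
            hence "dist s \<rho>0 < d1" using s False False' dr unfolding dist_real_def \<rho>_def \<rho>0_def by auto
            moreover have "dist \<rho> \<rho>0 < d1" using dr by (simp add: dist_real_def)
            ultimately show ?thesis using d1(2)[of s] d1(2)[of \<rho>] kq unfolding dist_real_def abs_less_iff by linarith
          next
            case False'': False
            hence "dist s (-\<rho>0) < d2" using s False False' dr unfolding dist_real_def \<rho>_def \<rho>0_def by auto
            moreover have "dist (-\<rho>) (-\<rho>0) < d2" using dr by (simp add: dist_real_def)
            ultimately show ?thesis using d2(2)[of s] d2(2)[of "-\<rho>"] kq unfolding dist_real_def abs_less_iff by linarith
          qed
        qed
      qed
      thus ?thesis using m e unfolding dist_real_def by auto
    qed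
  qed
qed


lemma c1_ineq:
  fixes c1 p1 :: "real \<Rightarrow> real"
  assumes dc1: "\<And>t. (c1 has_real_derivative p1 t) (at t)" and m1: "mono p1" and ab: "a \<le> b"
  shows "p1 a * (b - a) \<le> c1 b - c1 a"
proof -
  have "(\<lambda>t. c1 t - p1 a * t) a \<le> (\<lambda>t. c1 t - p1 a * t) b"
  proof (rule DERIV_nonneg_imp_nondecreasing[OF ab])
    fix t assume t: "a \<le> t" "t \<le> b"
    have "((\<lambda>t. c1 t - p1 a * t) has_real_derivative p1 t - p1 a * 1) (at t)"
      by (intro DERIV_diff dc1 DERIV_cmult DERIV_ident)
    moreover have "p1 t - p1 a * 1 \<ge> 0" using m1 t by (simp add: mono_def)
    ultimately show "\<exists>y. ((\<lambda>t. c1 t - p1 a * t) has_real_derivative y) (at t) \<and> y \<ge> 0" by blast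
  qed
  thus ?thesis by (simp add: algebra_simps)
qed

lemma c2_ineq:
  fixes c2 p2 :: "real \<Rightarrow> real"
  assumes dc2: "\<And>t. (c2 has_real_derivative p2 t) (at t)" and m2: "antimono p2" and ab: "a \<le> b"
  shows "p2 b * (b - a) \<le> c2 b - c2 a"
proof -
  have "(\<lambda>t. c2 t - p2 b * t) a \<le> (\<lambda>t. c2 t - p2 b * t) b"
  proof (rule DERIV_nonneg_imp_nondecreasing[OF ab])
    fix t assume t: "a \<le> t" "t \<le> b"
    have "((\<lambda>t. c2 t - p2 b * t) has_real_derivative p2 t - p2 b * 1) (at t)"
      by (intro DERIV_diff dc2 DERIV_cmult DERIV_ident)
    moreover have "p2 t - p2 b * 1 \<ge> 0" using m2 t by (simp add: antimono_def)
    ultimately show "\<exists>y. ((\<lambda>t. c2 t - p2 b * t) has_real_derivative y) (at t) \<and> y \<ge> 0" by blast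
  qed
  thus ?thesis by (simp add: algebra_simps)
qed

lemma H_convex:
  fixes c1 c2 g1 g2 p1 p2 :: "real \<Rightarrow> real" and y :: real
  assumes dc1: "\<And>t. (c1 has_real_derivative p1 t) (at t)"
    and dc2: "\<And>t. (c2 has_real_derivative p2 t) (at t)"
    and dg1: "\<And>t. (g1 has_real_derivative c1 t) (at t)"
    and dg2: "\<And>t. (g2 has_real_derivative c2 t) (at t)"
    and m1: "mono p1" and m2: "antimono p2"
  shows "convex_on UNIV (\<lambda>x. if x \<in> {..y} then 2*g1 x + c1 x*(y-x) + 2*g2 y + c2 y*(x-y)
                                else 2*g1 y + c1 y*(x-y) + 2*g2 x + c2 x*(y-x))"
proof (rule convex_on_realI[where f' = "\<lambda>x. if x \<in> {..y} then c1 x + p1 x*(y-x) + c2 y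
                                              else c1 y + c2 x + p2 x*(y-x)"])
  show "connected (UNIV::real set)" by simp
next
  fix x :: real
  have dA: "((\<lambda>x. 2*g1 x + c1 x*(y-x) + 2*g2 y + c2 y*(x-y)) has_real_derivative
              c1 x + p1 x*(y-x) + c2 y) (at z)" if "z = x" for z
    unfolding that
    by (rule derivative_eq_intros dg1 dc1 refl | simp add: algebra_simps)+
  have dB: "((\<lambda>x. 2*g1 y + c1 y*(x-y) + 2*g2 x + c2 x*(y-x)) has_real_derivative
              c1 y + c2 x + p2 x*(y-x)) (at z)" if "z = x" for z
    unfolding that
    by (rule derivative_eq_intros dg2 dc2 refl | simp add: algebra_simps)+
  have "((\<lambda>x. if x \<in> {..y} then 2*g1 x + c1 x*(y-x) + 2*g2 y + c2 y*(x-y)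
                                else 2*g1 y + c1 y*(x-y) + 2*g2 x + c2 x*(y-x)) has_vector_derivative
        (if x \<in> {..y} then c1 x + p1 x*(y-x) + c2 y else c1 y + c2 x + p2 x*(y-x))) (at x within UNIV)"
  proof (rule has_vector_derivative_If_within_closures[where T="{y<..}"])
    show "x \<in> {..y} \<union> {y<..}" by auto
    show "UNIV = {..y} \<union> {y<..}" by auto
    show "((\<lambda>x. 2*g1 x + c1 x*(y-x) + 2*g2 y + c2 y*(x-y)) has_vector_derivative
              c1 x + p1 x*(y-x) + c2 y) (at x within {..y} \<union> (closure {..y} \<inter> closure {y<..}))"
      using dA[OF refl] by (auto simp: has_real_derivative_iff_has_vector_derivative intro: has_vector_derivative_at_within)
    show "((\<lambda>x. 2*g1 y + c1 y*(x-y) + 2*g2 x + c2 x*(y-x)) has_vector_derivative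
              c1 y + c2 x + p2 x*(y-x)) (at x within {y<..} \<union> (closure {..y} \<inter> closure {y<..}))"
      using dB[OF refl] by (auto simp: has_real_derivative_iff_has_vector_derivative intro: has_vector_derivative_at_within)
    assume "x \<in> closure {..y}" "x \<in> closure {y<..}"
    hence "x = y" by (simp add: closure_closed)
    thus "2*g1 x + c1 x*(y-x) + 2*g2 y + c2 y*(x-y) = 2*g1 y + c1 y*(x-y) + 2*g2 x + c2 x*(y-x)" by simp
    show "c1 x + p1 x*(y-x) + c2 y = c1 y + c2 x + p2 x*(y-x)" using \<open>x = y\<close> by simp
  qed
  thus "((\<lambda>x. if x \<in> {..y} then 2*g1 x + c1 x*(y-x) + 2*g2 y + c2 y*(x-y)
                                else 2*g1 y + c1 y*(x-y) + 2*g2 x + c2 x*(y-x)) has_real_derivative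
        (if x \<in> {..y} then c1 x + p1 x*(y-x) + c2 y else c1 y + c2 x + p2 x*(y-x))) (at x)"
    by (simp add: has_real_derivative_iff_has_vector_derivative)
next
  fix x x' :: real assume xx: "x \<le> x'"
  show "(if x \<in> {..y} then c1 x + p1 x*(y-x) + c2 y else c1 y + c2 x + p2 x*(y-x))
      \<le> (if x' \<in> {..y} then c1 x' + p1 x'*(y-x') + c2 y else c1 y + c2 x' + p2 x'*(y-x'))"
  proof (cases "x' \<le> y")
    case True
    have L: "p1 x * (x' - x) \<le> c1 x' - c1 x" by (rule c1_ineq[OF dc1 m1 xx])
    have "(p1 x' - p1 x)*(y-x') \<ge> 0" using m1 xx True by (intro mult_nonneg_nonneg) (auto simp: mono_def)
    moreover have "p1 x' * (y - x') - p1 x*(y-x) = (p1 x' - p1 x)*(y-x') - p1 x*(x' - x)"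
      by (simp add: algebra_simps)
    ultimately show ?thesis using True xx L by auto
  next
    case False
    show ?thesis
    proof (cases "x \<le> y")
      case True
      have L1: "p1 x * (y - x) \<le> c1 y - c1 x" by (rule c1_ineq[OF dc1 m1 True])
      have L2: "p2 x' * (x' - y) \<le> c2 x' - c2 y" by (rule c2_ineq[OF dc2 m2]) (use False in auto)
      have "p2 x' * (y - x') = - (p2 x' * (x' - y))" by (simp add: algebra_simps)
      thus ?thesis using True False L1 L2 by auto
    next
      case False': False
      have L: "p2 x' * (x' - x) \<le> c2 x' - c2 x" by (rule c2_ineq[OF dc2 m2 xx])
      have "(p2 x - p2 x')*(x - y) \<ge> 0" using m2 xx False' by (intro mult_nonneg_nonneg) (auto simp: antimono_def)
      moreover have "p2 x'*(x'-x) + p2 x'*(y - x') - p2 x*(y - x) = (p2 x - p2 x')*(x - y)"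
        by (simp add: algebra_simps)
      ultimately show ?thesis using False False' L by auto
    qed
  qed
qed

theorem lemma5p5:
  fixes G :: "real \<Rightarrow> real"
  assumes "C2 G"
  shows "\<exists>F :: real \<times> real \<Rightarrow> real. separately_convex F \<and> (\<forall>t. F (t, t) = G t)"
proof -
  obtain G' G'' where dG: "\<And>t. (G has_real_derivative G' t) (at t)"
    and dG': "\<And>t. (G' has_real_derivative G'' t) (at t)" and cG'': "continuous_on UNIV G''"
    using assms unfolding C2_def by blast
  define k where "k = (\<lambda>t. \<bar>G'' t\<bar>)"
  have ck: "continuous_on UNIV k" unfolding k_def by (intro continuous_intros cG'')
  define p1 where "p1 = (\<lambda>t. - runmax k (min t 0))"
  define p2 where "p2 = (\<lambda>t. - runmax k (max t 0))"
  have rc: "isCont (runmax k) z" for z by (rule runmax_cont[OF ck])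
  have cp1: "isCont p1 x" for x
  proof -
    have "isCont (\<lambda>t. min t 0) x" by (intro continuous_intros)
    hence "isCont (\<lambda>t. runmax k (min t 0)) x" by (rule isCont_o2[OF _ rc])
    from isCont_minus[OF this] show ?thesis by (simp add: p1_def p2_def)
  qed
  have cp2: "isCont p2 x" for x
  proof -
    have "isCont (\<lambda>t. max t 0) x" by (intro continuous_intros)
    hence "isCont (\<lambda>t. runmax k (max t 0)) x" by (rule isCont_o2[OF _ rc])
    from isCont_minus[OF this] show ?thesis by (simp add: p1_def p2_def)
  qed
  have m1: "mono p1" unfolding mono_def p1_def
    by (auto intro!: runmax_mono[OF ck])
  have m2: "antimono p2" unfolding antimono_def p2_def
    by (auto intro!: runmax_mono[OF ck])
  obtain c1 where dc1: "\<And>t. (c1 has_real_derivative p1 t) (at t)" using antideriv[OF cp1] by blast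
  obtain c2 where dc2: "\<And>t. (c2 has_real_derivative p2 t) (at t)" using antideriv[OF cp2] by blast
  obtain g1 where dg1: "\<And>t. (g1 has_real_derivative c1 t) (at t)"
    using antideriv[of c1] DERIV_isCont[OF dc1] by blast
  obtain g2 where dg2: "\<And>t. (g2 has_real_derivative c2 t) (at t)"
    using antideriv[of c2] DERIV_isCont[OF dc2] by blast
  define s where "s = (\<lambda>t. G t / 2 - g1 t - g2 t)"
  define s' where "s' = (\<lambda>t. G' t / 2 - c1 t - c2 t)"
  have ds: "(s has_real_derivative s' t) (at t)" for t
    unfolding s_def s'_def by (rule derivative_eq_intros dG dg1 dg2 refl | simp)+
  have ds': "(s' has_real_derivative G'' t / 2 - p1 t - p2 t) (at t)" for t
    unfolding s'_def by (rule derivative_eq_intros dG' dc1 dc2 refl | simp)+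
  have nonneg: "G'' t / 2 - p1 t - p2 t \<ge> 0" for t
  proof -
    have z1: "runmax k (min t 0) \<ge> 0" using runmax_upper[OF ck, of 0] by (simp add: k_def) (smt (verit) abs_ge_zero)
    have z2: "runmax k (max t 0) \<ge> 0" using runmax_upper[OF ck, of 0] by (simp add: k_def) (smt (verit) abs_ge_zero)
    have "k t \<le> runmax k (min t 0) \<or> k t \<le> runmax k (max t 0)"
      by (cases "t \<le> 0") (auto intro!: runmax_upper[OF ck] simp: min_def max_def)
    thus ?thesis using z1 z2 unfolding p1_def p2_def k_def by auto
  qed
  have cs: "convex_on UNIV s"
  proof (rule convex_on_realI[OF _ ds])
    show "connected (UNIV :: real set)" by simp
    fix x y :: real assume "x \<le> y"
    show "s' x \<le> s' y"
      by (rule DERIV_nonneg_imp_nondecreasing[OF \<open>x \<le> y\<close>]) (use ds' nonneg in blast)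
  qed
  define H where "H = (\<lambda>x y. if x \<in> {..y} then 2*g1 x + c1 x*(y-x) + 2*g2 y + c2 y*(x-y)
                                else 2*g1 y + c1 y*(x-y) + 2*g2 x + c2 x*(y-x))"
  have Hsym: "H x y = H y x" for x y
    unfolding H_def by (cases x y rule: linorder_cases) auto
  have Hc: "convex_on UNIV (\<lambda>x. H x y)" for y
    unfolding H_def by (rule H_convex[OF dc1 dc2 dg1 dg2 m1 m2])
  define F where "F = (\<lambda>(x, y). s x + s y + H x y)"
  have "separately_convex F"
    unfolding separately_convex_def
  proof (intro conjI allI)
    fix y
    show "convex_on UNIV (\<lambda>x. F (x, y))"
      unfolding F_def by (simp, intro convex_on_add cs convex_on_const[THEN iffD2] Hc convex_UNIV)
  next
    fix x
    have "(\<lambda>y. F (x, y)) = (\<lambda>y. s y + s x + H y x)" unfolding F_def using Hsym by (auto simp: algebra_simps)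
    thus "convex_on UNIV (\<lambda>y. F (x, y))"
      by (simp, intro convex_on_add cs convex_on_const[THEN iffD2] Hc convex_UNIV)
  qed
  moreover have "\<forall>t. F (t, t) = G t"
    unfolding F_def H_def s_def by simp
  ultimately show ?thesis by blast
qed

end
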